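(* Let $X$ be a topologically complete space and $\mathcal A$ a family of closed, locally finite, normal covers of $X$ satisfying conditions (I) and (II), with $\Lambda$, $N_\lambda$, $N_\infty$, $N^{(0)}_\infty$, $\mathrm{cov}_\lambda$, $\sigma_\lambda$, $\wedge$ and $\pi:N_\infty\to X$ as in the context. Then: (1) the map $\pi$ is continuous; (2) for $z,z'\in N^{(0)}_\infty$, $\pi(z')=\pi(z)$ if and only if $\wedge z'(\lambda)\in\mathrm{star}_{\mathrm{cov}_\lambda}(\wedge z(\lambda))$ (i.e. $\wedge z'(\lambda)\cap\wedge z(\lambda)\neq\emptyset$) for each $\lambda\in\Lambda$; (3) if $z\in N_\infty$ and $z_0\in N^{(0)}_\infty$ satisfy that $z_0(\lambda)$ is a vertex of $\sigma_\lambda(z(\lambda))$ for each $\lambda\in\Lambda$, then $\pi(z)=\pi(z_0)$.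
   Context: A topologically complete space is a Tychonoff space complete with respect to its finest uniformity. A closed, locally finite, normal cover $\alpha$ of $X$ is a locally finite cover by closed sets admitting a partition of unity $\{\phi_{\alpha,V}:V\in\alpha\}$ with $\mathrm{cl}(\phi_{\alpha,V}^{-1}((0,1]))\subset\mathrm{int}(V)$, $\sum_V\phi_{\alpha,V}=1$. For a cover $\alpha$ and a set $S$, $\mathrm{star}_\alpha(S)=\{V\in\alpha:V\cap S\neq\emptyset\}$; $\mathrm{star}_\alpha(x)=\mathrm{star}_\alpha(\{x\})$. Conditions: (I) for each open $U\subset X$ and $x\in U$ there is $\alpha\in\mathcal A$ with $\bigcup\mathrm{star}_\alpha(x)\subset U$; (II) if $f(\alpha)\in\alpha$ is chosen for each $\alpha\in\mathcal A$ and $\{f(\alpha)\}$ has the finite intersection property, then $\bigcap_\alpha f(\alpha)\neq\emptyset$. Construction: $\Lambda$ is the set of finite subsets of $\mathcal A$ directed by inclusion. For $\lambda\in\Lambda$, $N^{(0)}_\lambda$ is the set of functions $v$ on $\lambda$ with $v(\alpha)\in\alpha$ for all $\alpha\in\lambda$ and $\wedge v:=\bigcap_{\alpha\in\lambda}v(\alpha)\neq\emptyset$ (empty intersection meaning $X$); $\mathrm{cov}_\lambda=\{\wedge v:v\in N^{(0)}_\lambda\}$. $F_\lambda$ is the simplicial complex (weak topology) with vertex set $N^{(0)}_\lambda$ in which $\{v_1,\dots,v_k\}$ spans a simplex iff $\wedge v_i\cap\wedge v_j\neq\emptyset$ for all $i,j$; $N_\lambda$ is its subcomplex with the same vertices in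 which $\{v_1,\dots,v_k\}$ spans a simplex iff $\bigcap_i\wedge v_i\neq\emptyset$. For $\lambda\subset\mu$, $\pi^\mu_\lambda$ is the simplicial map sending a vertex $v$ to $v|_\lambda$. $N_\infty=\varprojlim(N_\lambda,\pi^\mu_\lambda;\Lambda)$ with projections $\pi_\lambda$, $z(\lambda)=\pi_\lambda(z)$, and $N^{(0)}_\infty=\varprojlim(N^{(0)}_\lambda,\pi^\mu_\lambda|;\Lambda)\subset N_\infty$. For $a\in N_\lambda$, $\sigma_\lambda(a)$ is the unique simplex containing $a$ in its interior, and $\wedge a=\bigcap\{\wedge v: v\text{ a vertex of }\sigma_\lambda(a)\}$. For each $z\in N_\infty$ the set $\bigcap_{\lambda\in\Lambda}\wedge z(\lambda)$ consists of exactly one point, and $\pi:N_\infty\to X$ is defined by $\{\pi(z)\}=\bigcap_{\lambda}\wedge z(\lambda)$. *)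

theory Defs
  imports "HOL-Analysis.Analysis"
begin

definition tychonoff_space :: "'a topology \<Rightarrow> bool" where
  "tychonoff_space X \<longleftrightarrow> completely_regular_space X \<and> Hausdorff_space X"

definition uniformity_on :: "'a set \<Rightarrow> ('a \<times> 'a) set set \<Rightarrow> bool" where
  "uniformity_on S U \<longleftrightarrow>
     U \<noteq> {} \<and>
     (\<forall>E\<in>U. E \<subseteq> S \<times> S \<and> Id_on S \<subseteq> E) \<and>
     (\<forall>E F. E \<in> U \<and> E \<subseteq> F \<and> F \<subseteq> S \<times> S \<longrightarrow> F \<in> U) \<and>
     (\<forall>E\<in>U. \<forall>F\<in>U. E \<inter> F \<in> U) \<and>
     (\<forall>E\<in>U. E\<inverse> \<in> U) \<and>
     (\<forall>E\<in>U. \<exists>F\<in>U. F O F \<subseteq> E)"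

definition compatible_uniformity :: "'a topology \<Rightarrow> ('a \<times> 'a) set set \<Rightarrow> bool" where
  "compatible_uniformity X U \<longleftrightarrow>
     uniformity_on (topspace X) U \<and>
     (\<forall>W. openin X W \<longleftrightarrow> W \<subseteq> topspace X \<and> (\<forall>x\<in>W. \<exists>E\<in>U. E `` {x} \<subseteq> W))"

definition finest_uniformity :: "'a topology \<Rightarrow> ('a \<times> 'a) set set \<Rightarrow> bool" where
  "finest_uniformity X U \<longleftrightarrow>
     compatible_uniformity X U \<and> (\<forall>U'. compatible_uniformity X U' \<longrightarrow> U' \<subseteq> U)"

definition cauchy_filter_unif :: "('a \<times> 'a) set set \<Rightarrow> 'a filter \<Rightarrow> bool" where
  "cauchy_filter_unif U F \<longleftrightarrow> (\<forall>E\<in>U. \<exists>A. eventually (\<lambda>x. x \<in> A) F \<and> A \<times> A \<subseteq> E)"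

definition complete_uniformity :: "'a topology \<Rightarrow> ('a \<times> 'a) set set \<Rightarrow> bool" where
  "complete_uniformity X U \<longleftrightarrow>
     (\<forall>F. F \<noteq> bot \<and> eventually (\<lambda>x. x \<in> topspace X) F \<and> cauchy_filter_unif U F \<longrightarrow>
        (\<exists>x\<in>topspace X. \<forall>W. openin X W \<and> x \<in> W \<longrightarrow> eventually (\<lambda>y. y \<in> W) F))"

definition topologically_complete :: "'a topology \<Rightarrow> bool" where
  "topologically_complete X \<longleftrightarrow> tychonoff_space X \<and>
     (\<exists>U. finest_uniformity X U \<and> complete_uniformity X U)"

definition star :: "'a set set \<Rightarrow> 'a set \<Rightarrow> 'a set set" where
  "star \<alpha> S = {V \<in> \<alpha>. V \<inter> S \<noteq> {}}"

definition closed_lf_normal_cover :: "'a topology \<Rightarrow> 'a set set \<Rightarrow> bool" where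
  "closed_lf_normal_cover X \<alpha> \<longleftrightarrow>
     (\<forall>V\<in>\<alpha>. closedin X V) \<and> \<Union>\<alpha> = topspace X \<and> locally_finite_in X \<alpha> \<and>
     (\<exists>\<phi> :: 'a set \<Rightarrow> 'a \<Rightarrow> real.
        (\<forall>V\<in>\<alpha>. continuous_map X (top_of_set {0..1}) (\<phi> V)) \<and>
        (\<forall>V\<in>\<alpha>. X closure_of {x \<in> topspace X. \<phi> V x > 0} \<subseteq> X interior_of V) \<and>
        (\<forall>x\<in>topspace X. (\<Sum>V\<in>{V\<in>\<alpha>. x \<in> V}. \<phi> V x) = 1))"

definition condition_I :: "'a topology \<Rightarrow> 'a set set set \<Rightarrow> bool" where
  "condition_I X \<A> \<longleftrightarrow>
     (\<forall>U x. openin X U \<and> x \<in> U \<longrightarrow> (\<exists>\<alpha>\<in>\<A>. \<Union>(star \<alpha> {x}) \<subseteq> U))"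

definition condition_II :: "'a set set set \<Rightarrow> bool" where
  "condition_II \<A> \<longleftrightarrow>
     (\<forall>f. (\<forall>\<alpha>\<in>\<A>. f \<alpha> \<in> \<alpha>) \<and>
          (\<forall>\<F>. finite \<F> \<and> \<F> \<subseteq> \<A> \<and> \<F> \<noteq> {} \<longrightarrow> \<Inter>(f ` \<F>) \<noteq> {})
        \<longrightarrow> \<Inter>(f ` \<A>) \<noteq> {})"

definition Lam :: "'a set set set \<Rightarrow> 'a set set set set" where
  "Lam \<A> = {l. finite l \<and> l \<subseteq> \<A>}"

text \<open>For a vertex v (a choice function on lambda), wedge of v; the empty intersection is X.\<close>
definition wedge :: "'a topology \<Rightarrow> 'a set set set \<Rightarrow> ('a set set \<Rightarrow> 'a set) \<Rightarrow> 'a set" where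
  "wedge X l v = topspace X \<inter> (\<Inter>\<alpha>\<in>l. v \<alpha>)"

definition N0 :: "'a topology \<Rightarrow> 'a set set set \<Rightarrow> ('a set set \<Rightarrow> 'a set) set" where
  "N0 X l = {v \<in> (\<Pi>\<^sub>E \<alpha>\<in>l. \<alpha>). wedge X l v \<noteq> {}}"

definition cov :: "'a topology \<Rightarrow> 'a set set set \<Rightarrow> 'a set set" where
  "cov X l = wedge X l ` N0 X l"

definition is_simplex :: "'a topology \<Rightarrow> 'a set set set \<Rightarrow> ('a set set \<Rightarrow> 'a set) set \<Rightarrow> bool" where
  "is_simplex X l \<sigma> \<longleftrightarrow> finite \<sigma> \<and> \<sigma> \<noteq> {} \<and> \<sigma> \<subseteq> N0 X l \<and> (\<Inter>v\<in>\<sigma>. wedge X l v) \<noteq> {}"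

text \<open>Geometric (closed) simplex spanned by a finite vertex set, points given by
  barycentric coordinates.\<close>
definition geom_simplex :: "'v set \<Rightarrow> ('v \<Rightarrow> real) set" where
  "geom_simplex \<sigma> = {a. (\<forall>v. 0 \<le> a v) \<and> (\<forall>v. v \<notin> \<sigma> \<longrightarrow> a v = 0) \<and> sum a \<sigma> = 1}"

definition Npoly :: "'a topology \<Rightarrow> 'a set set set \<Rightarrow> (('a set set \<Rightarrow> 'a set) \<Rightarrow> real) set" where
  "Npoly X l = (\<Union>\<sigma>\<in>{\<sigma>. is_simplex X l \<sigma>}. geom_simplex \<sigma>)"

definition weak_open :: "'a topology \<Rightarrow> 'a set set set \<Rightarrow> (('a set set \<Rightarrow> 'a set) \<Rightarrow> real) set \<Rightarrow> bool" where
  "weak_open X l U \<longleftrightarrow> U \<subseteq> Npoly X l \<and>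
     (\<forall>\<sigma>. is_simplex X l \<sigma> \<longrightarrow> openin (top_of_set (geom_simplex \<sigma>)) (U \<inter> geom_simplex \<sigma>))"

lemma istopology_weak_open: "istopology (weak_open X l)"
  unfolding istopology_def
proof (intro conjI allI impI)
  fix S T assume "weak_open X l S" "weak_open X l T"
  then show "weak_open X l (S \<inter> T)"
    unfolding weak_open_def
  proof (intro conjI allI impI)
    show "S \<inter> T \<subseteq> Npoly X l" using \<open>weak_open X l S\<close> by (auto simp: weak_open_def)
    fix \<sigma> assume s: "is_simplex X l \<sigma>"
    have "openin (top_of_set (geom_simplex \<sigma>)) ((S \<inter> geom_simplex \<sigma>) \<inter> (T \<inter> geom_simplex \<sigma>))"
      using s \<open>weak_open X l S\<close> \<open>weak_open X l T\<close> unfolding weak_open_def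
      by (intro openin_Int[of _ "S \<inter> geom_simplex \<sigma>" "T \<inter> geom_simplex \<sigma>"]) auto
    moreover have "(S \<inter> geom_simplex \<sigma>) \<inter> (T \<inter> geom_simplex \<sigma>) = S \<inter> T \<inter> geom_simplex \<sigma>" by auto
    ultimately show "openin (top_of_set (geom_simplex \<sigma>)) (S \<inter> T \<inter> geom_simplex \<sigma>)" by simp
  qed
next
  fix K assume K: "\<forall>S\<in>K. weak_open X l S"
  show "weak_open X l (\<Union>K)"
    unfolding weak_open_def
  proof (intro conjI allI impI)
    show "\<Union>K \<subseteq> Npoly X l" using K by (auto simp: weak_open_def)
    fix \<sigma> assume "is_simplex X l \<sigma>"
    then have "\<forall>S\<in>K. openin (top_of_set (geom_simplex \<sigma>)) (S \<inter> geom_simplex \<sigma>)"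
      using K by (auto simp: weak_open_def)
    then have "openin (top_of_set (geom_simplex \<sigma>)) (\<Union>S\<in>K. S \<inter> geom_simplex \<sigma>)"
      using openin_Union[of "(\<lambda>S. S \<inter> geom_simplex \<sigma>) ` K" "top_of_set (geom_simplex \<sigma>)"] by auto
    moreover have "(\<Union>S\<in>K. S \<inter> geom_simplex \<sigma>) = \<Union>K \<inter> geom_simplex \<sigma>" by auto
    ultimately show "openin (top_of_set (geom_simplex \<sigma>)) (\<Union>K \<inter> geom_simplex \<sigma>)" by simp
  qed
qed

definition Ntop :: "'a topology \<Rightarrow> 'a set set set \<Rightarrow> (('a set set \<Rightarrow> 'a set) \<Rightarrow> real) topology" where
  "Ntop X l = topology (weak_open X l)"

definition vertex_pt :: "'v \<Rightarrow> ('v \<Rightarrow> real)" where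
  "vertex_pt v = (\<lambda>w. if w = v then 1 else 0)"

text \<open>Vertex set of sigma_l(a), the simplex containing a in its interior.\<close>
definition carrier_simplex :: "('v \<Rightarrow> real) \<Rightarrow> 'v set" where
  "carrier_simplex a = {v. a v \<noteq> 0}"

definition wedge_pt :: "'a topology \<Rightarrow> 'a set set set \<Rightarrow> (('a set set \<Rightarrow> 'a set) \<Rightarrow> real) \<Rightarrow> 'a set" where
  "wedge_pt X l a = topspace X \<inter> (\<Inter>v\<in>carrier_simplex a. wedge X l v)"

text \<open>Bonding map pi^m_l: the simplicial map induced by restriction of v to l, extended linearly.\<close>
definition bond :: "'a set set set \<Rightarrow> (('a set set \<Rightarrow> 'a set) \<Rightarrow> real) \<Rightarrow> (('a set set \<Rightarrow> 'a set) \<Rightarrow> real)" where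
  "bond l a = (\<lambda>w. \<Sum>v\<in>{v. a v \<noteq> 0 \<and> restrict v l = w}. a v)"

definition Ninf :: "'a topology \<Rightarrow> 'a set set set \<Rightarrow> ('a set set set \<Rightarrow> (('a set set \<Rightarrow> 'a set) \<Rightarrow> real)) set" where
  "Ninf X \<A> = {z \<in> (\<Pi>\<^sub>E l\<in>Lam \<A>. Npoly X l).
      \<forall>l\<in>Lam \<A>. \<forall>m\<in>Lam \<A>. l \<subseteq> m \<longrightarrow> bond l (z m) = z l}"

definition Ninf_top :: "'a topology \<Rightarrow> 'a set set set \<Rightarrow> ('a set set set \<Rightarrow> (('a set set \<Rightarrow> 'a set) \<Rightarrow> real)) topology" where
  "Ninf_top X \<A> = subtopology (product_topology (\<lambda>l. Ntop X l) (Lam \<A>)) (Ninf X \<A>)"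

definition N0inf :: "'a topology \<Rightarrow> 'a set set set \<Rightarrow> ('a set set set \<Rightarrow> (('a set set \<Rightarrow> 'a set) \<Rightarrow> real)) set" where
  "N0inf X \<A> = {z \<in> Ninf X \<A>. \<forall>l\<in>Lam \<A>. \<exists>v\<in>N0 X l. z l = vertex_pt v}"

definition pi_map :: "'a topology \<Rightarrow> 'a set set set \<Rightarrow> ('a set set set \<Rightarrow> (('a set set \<Rightarrow> 'a set) \<Rightarrow> real)) \<Rightarrow> 'a" where
  "pi_map X \<A> z = (THE x. x \<in> topspace X \<and> (\<forall>l\<in>Lam \<A>. x \<in> wedge_pt X l (z l)))"

end

theory Submission
  imports Defs
begin

lemma clf_props:
  assumes "closed_lf_normal_cover X \<alpha>"
  shows "\<forall>V\<in>\<alpha>. closedin X V" "\<Union>\<alpha> = topspace X" "locally_finite_in X \<alpha>"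
  using assms unfolding closed_lf_normal_cover_def by blast+

lemma condI_use:
  assumes "condition_I X \<A>" "openin X U" "x \<in> U"
  obtains \<alpha> where "\<alpha> \<in> \<A>" "\<Union>(star \<alpha> {x}) \<subseteq> U"
  using assms unfolding condition_I_def by blast

lemma condII_use:
  assumes "condition_II \<A>" "\<forall>\<alpha>\<in>\<A>. f \<alpha> \<in> \<alpha>"
    "\<forall>\<F>. finite \<F> \<and> \<F> \<subseteq> \<A> \<and> \<F> \<noteq> {} \<longrightarrow> \<Inter>(f ` \<F>) \<noteq> {}"
  shows "\<Inter>(f ` \<A>) \<noteq> {}"
proof -
  have "\<forall>f. (\<forall>\<alpha>\<in>\<A>. f \<alpha> \<in> \<alpha>) \<and>
          (\<forall>\<F>. finite \<F> \<and> \<F> \<subseteq> \<A> \<and> \<F> \<noteq> {} \<longrightarrow> \<Inter>(f ` \<F>) \<noteq> {})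
        \<longrightarrow> \<Inter>(f ` \<A>) \<noteq> {}" using assms(1) unfolding condition_II_def .
  then show ?thesis using assms(2,3) by blast
qed

lemma key_sep:
  assumes H: "Hausdorff_space X"
    and cov: "\<forall>\<alpha>\<in>\<A>. closed_lf_normal_cover X \<alpha>"
    and I: "condition_I X \<A>"
    and S: "\<forall>\<alpha>\<in>\<A>. S \<alpha> \<subseteq> \<alpha>"
    and fip: "\<And>F. finite F \<Longrightarrow> F \<subseteq> \<A> \<Longrightarrow> F \<noteq> {} \<Longrightarrow> \<exists>q. \<forall>\<alpha>\<in>F. \<forall>V\<in>S \<alpha>. q \<in> V"
    and x: "x \<in> topspace X" and y: "y \<in> topspace X"
    and fb: "\<And>\<beta>. \<beta> \<in> \<A> \<Longrightarrow> \<exists>V\<in>S \<beta>. x \<in> V"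
    and ga: "\<And>\<alpha>. \<alpha> \<in> \<A> \<Longrightarrow> \<exists>V\<in>S \<alpha>. y \<in> V"
  shows "x = y"
proof (rule ccontr)
  assume xy: "x \<noteq> y"
  have "closedin X {y}" using H y by (simp add: Hausdorff_imp_t1_space closedin_t1_singleton)
  then have "openin X (topspace X - {y})" by (simp add: closedin_def)
  moreover have "x \<in> topspace X - {y}" using x xy by blast
  ultimately obtain \<alpha> where a: "\<alpha> \<in> \<A>" and aU: "\<Union>(star \<alpha> {x}) \<subseteq> topspace X - {y}"
    using condI_use[OF I] by metis
  have ca: "closed_lf_normal_cover X \<alpha>" using cov a by blast
  let ?B = "{V \<in> \<alpha>. x \<notin> V}"
  have "closedin X (\<Union>?B)"
    apply (rule closedin_locally_finite_Union)
    using clf_props(1)[OF ca] apply blast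
    using clf_props(3)[OF ca] locally_finite_in_subset by (metis (no_types, lifting) mem_Collect_eq subsetI)
  then have "openin X (topspace X - \<Union>?B)" by (simp add: closedin_def)
  moreover have "x \<in> topspace X - \<Union>?B" using x by blast
  ultimately obtain \<beta> where b: "\<beta> \<in> \<A>" and bU: "\<Union>(star \<beta> {x}) \<subseteq> topspace X - \<Union>?B"
    using condI_use[OF I] by metis
  obtain q where q: "\<forall>\<gamma>\<in>{\<alpha>,\<beta>}. \<forall>V\<in>S \<gamma>. q \<in> V" using fip[of "{\<alpha>,\<beta>}"] a b by auto
  obtain Vb where Vb: "Vb \<in> S \<beta>" "x \<in> Vb" using fb b by blast
  obtain Va where Va: "Va \<in> S \<alpha>" "y \<in> Va" using ga a by blast
  have "Vb \<in> star \<beta> {x}" using Vb S b unfolding star_def by auto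
  then have "q \<in> topspace X - \<Union>?B" using bU q Vb by auto
  moreover have "q \<in> Va" using q Va by auto
  moreover have "Va \<in> \<alpha>" using Va S a by auto
  ultimately have "x \<in> Va" by auto
  then have "Va \<in> star \<alpha> {x}" using \<open>Va \<in> \<alpha>\<close> unfolding star_def by auto
  then show False using aU Va by auto
qed

lemma key:
  assumes H: "Hausdorff_space X"
    and cov: "\<forall>\<alpha>\<in>\<A>. closed_lf_normal_cover X \<alpha>"
    and I: "condition_I X \<A>"
    and II: "condition_II \<A>"
    and ne: "topspace X \<noteq> {}"
    and S: "\<forall>\<alpha>\<in>\<A>. S \<alpha> \<subseteq> \<alpha> \<and> S \<alpha> \<noteq> {}"
    and fip: "\<And>F. finite F \<Longrightarrow> F \<subseteq> \<A> \<Longrightarrow> F \<noteq> {} \<Longrightarrow> \<exists>q. \<forall>\<alpha>\<in>F. \<forall>V\<in>S \<alpha>. q \<in> V"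
  shows "\<exists>!x. x \<in> topspace X \<and> (\<forall>\<alpha>\<in>\<A>. \<forall>V\<in>S \<alpha>. x \<in> V)"
proof -
  have S1: "\<forall>\<alpha>\<in>\<A>. S \<alpha> \<subseteq> \<alpha>" using S by blast
  obtain x0 where x0: "x0 \<in> topspace X" using ne by blast
  have ot: "openin X (topspace X)" by simp
  obtain \<alpha>0 where a0: "\<alpha>0 \<in> \<A>" and "\<Union>(star \<alpha>0 {x0}) \<subseteq> topspace X"
    by (rule condI_use[OF I ot x0])
  have pt: "\<Inter>(f ` \<A>) \<noteq> {}" if f: "\<forall>\<alpha>\<in>\<A>. f \<alpha> \<in> S \<alpha>" for f
  proof -
    have "\<forall>\<alpha>\<in>\<A>. f \<alpha> \<in> \<alpha>" using f S by blast
    moreover have "\<forall>F. finite F \<and> F \<subseteq> \<A> \<and> F \<noteq> {} \<longrightarrow> \<Inter>(f ` F) \<noteq> {}"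
    proof (intro allI impI)
      fix F assume F: "finite F \<and> F \<subseteq> \<A> \<and> F \<noteq> {}"
      then obtain q where q: "\<forall>\<alpha>\<in>F. \<forall>V\<in>S \<alpha>. q \<in> V" using fip[of F] by blast
      have "\<forall>\<alpha>\<in>F. f \<alpha> \<in> S \<alpha>" using f F by blast
      then have "q \<in> \<Inter>(f ` F)" using q by simp
      then show "\<Inter>(f ` F) \<noteq> {}" by blast
    qed
    ultimately show ?thesis by (rule condII_use[OF II])
  qed
  have top: "x \<in> topspace X" if "x \<in> \<Inter>(f ` \<A>)" "\<forall>\<alpha>\<in>\<A>. f \<alpha> \<in> S \<alpha>" for x f
  proof -
    have "x \<in> f \<alpha>0" using that a0 by blast
    moreover have "f \<alpha>0 \<in> \<alpha>0" using that a0 S by blast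
    moreover have "\<Union>\<alpha>0 = topspace X" using cov a0 clf_props(2) by blast
    ultimately show ?thesis by blast
  qed
  define f where "f = (\<lambda>\<alpha>. SOME V. V \<in> S \<alpha>)"
  have f: "\<forall>\<alpha>\<in>\<A>. f \<alpha> \<in> S \<alpha>" unfolding f_def using S by (simp add: some_in_eq)
  obtain x where x: "x \<in> \<Inter>(f ` \<A>)" using pt[OF f] by blast
  have xt: "x \<in> topspace X" using top[OF x f] .
  have allx: "x \<in> V" if a1: "\<alpha>1 \<in> \<A>" and V: "V \<in> S \<alpha>1" for \<alpha>1 V
  proof -
    define g where "g = f(\<alpha>1 := V)"
    have g: "\<forall>\<alpha>\<in>\<A>. g \<alpha> \<in> S \<alpha>" using f V unfolding g_def by auto
    obtain y where y: "y \<in> \<Inter>(g ` \<A>)" using pt[OF g] by blast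
    have yt: "y \<in> topspace X" using top[OF y g] .
    have "x = y"
    proof (rule key_sep[OF H cov I S1 fip xt yt])
      fix \<beta> assume "\<beta> \<in> \<A>"
      then show "\<exists>V\<in>S \<beta>. x \<in> V" using x f by blast
    next
      fix \<beta> assume "\<beta> \<in> \<A>"
      then show "\<exists>V\<in>S \<beta>. y \<in> V" using y g by blast
    qed
    then show ?thesis using y a1 unfolding g_def by auto
  qed
  show ?thesis
  proof (rule ex1I[of _ x])
    show "x \<in> topspace X \<and> (\<forall>\<alpha>\<in>\<A>. \<forall>V\<in>S \<alpha>. x \<in> V)" using xt allx by blast
  next
    fix y assume y: "y \<in> topspace X \<and> (\<forall>\<alpha>\<in>\<A>. \<forall>V\<in>S \<alpha>. y \<in> V)"
    have yt: "y \<in> topspace X" using y by blast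
    show "y = x"
    proof (rule key_sep[OF H cov I S1 fip yt xt])
      fix \<beta> assume b: "\<beta> \<in> \<A>"
      then obtain V where "V \<in> S \<beta>" using S by blast
      then show "\<exists>V\<in>S \<beta>. y \<in> V" using y b by blast
    next
      fix \<beta> assume b: "\<beta> \<in> \<A>"
      then obtain V where "V \<in> S \<beta>" using S by blast
      then show "\<exists>V\<in>S \<beta>. x \<in> V" using allx b by blast
    qed
  qed
qed



lemma npoly_props:
  assumes "a \<in> Npoly X l"
  shows "finite (carrier_simplex a)" "carrier_simplex a \<noteq> {}" "carrier_simplex a \<subseteq> N0 X l"
    "(\<Inter>v\<in>carrier_simplex a. wedge X l v) \<noteq> {}" "\<forall>v. 0 \<le> a v"
proof -
  obtain \<sigma> where s: "is_simplex X l \<sigma>" and a: "a \<in> geom_simplex \<sigma>"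
    using assms unfolding Npoly_def by blast
  have sub: "carrier_simplex a \<subseteq> \<sigma>" using a unfolding geom_simplex_def carrier_simplex_def by auto
  show "finite (carrier_simplex a)" using sub s unfolding is_simplex_def using finite_subset by blast
  show "carrier_simplex a \<subseteq> N0 X l" using sub s unfolding is_simplex_def by blast
  show "\<forall>v. 0 \<le> a v" using a unfolding geom_simplex_def by blast
  show "carrier_simplex a \<noteq> {}"
  proof
    assume "carrier_simplex a = {}"
    then have "\<forall>v. a v = 0" unfolding carrier_simplex_def by blast
    then have "sum a \<sigma> = 0" by simp
    then show False using a unfolding geom_simplex_def by simp
  qed
  have "(\<Inter>v\<in>\<sigma>. wedge X l v) \<subseteq> (\<Inter>v\<in>carrier_simplex a. wedge X l v)" using sub by blast
  then show "(\<Inter>v\<in>carrier_simplex a. wedge X l v) \<noteq> {}" using s unfolding is_simplex_def by blast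
qed

lemma bond_carrier:
  assumes "a \<in> Npoly X m"
  shows "carrier_simplex (bond l a) = (\<lambda>v. restrict v l) ` carrier_simplex a"
proof (intro set_eqI iffI)
  have fin: "finite (carrier_simplex a)" and nn: "\<forall>v. 0 \<le> a v" using npoly_props[OF assms] by auto
  fix w
  let ?T = "{v. a v \<noteq> 0 \<and> restrict v l = w}"
  have finT: "finite ?T" using fin by (rule finite_subset[rotated]) (auto simp: carrier_simplex_def)
  have eq: "bond l a w = sum a ?T" unfolding bond_def by simp
  {
    assume "w \<in> carrier_simplex (bond l a)"
    then have "sum a ?T \<noteq> 0" using eq unfolding carrier_simplex_def by simp
    then have "?T \<noteq> {}" by (metis sum.empty)
    then show "w \<in> (\<lambda>v. restrict v l) ` carrier_simplex a" unfolding carrier_simplex_def by auto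
  next
    assume "w \<in> (\<lambda>v. restrict v l) ` carrier_simplex a"
    then obtain v where v: "a v \<noteq> 0" "restrict v l = w" unfolding carrier_simplex_def by auto
    have "sum a ?T \<noteq> 0"
    proof
      assume "sum a ?T = 0"
      then have "\<forall>u\<in>?T. a u = 0" using sum_nonneg_eq_0_iff[OF finT] nn by blast
      then show False using v by blast
    qed
    then show "w \<in> carrier_simplex (bond l a)" using eq unfolding carrier_simplex_def by simp
  }
qed

lemma ninf_carrier:
  assumes z: "z \<in> Ninf X \<A>" and l: "l \<in> Lam \<A>" and m: "m \<in> Lam \<A>" and lm: "l \<subseteq> m"
  shows "carrier_simplex (z l) = (\<lambda>v. restrict v l) ` carrier_simplex (z m)"
proof -
  have "bond l (z m) = z l" using z l m lm unfolding Ninf_def by blast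
  moreover have "z m \<in> Npoly X m" using z m unfolding Ninf_def by auto
  ultimately show ?thesis using bond_carrier by metis
qed

lemma ninf_npoly: "z \<in> Ninf X \<A> \<Longrightarrow> l \<in> Lam \<A> \<Longrightarrow> z l \<in> Npoly X l"
  unfolding Ninf_def by auto

lemma single_Lam: "\<alpha> \<in> \<A> \<Longrightarrow> {\<alpha>} \<in> Lam \<A>"
  unfolding Lam_def by auto

definition Sz :: "('a set set set \<Rightarrow> (('a set set \<Rightarrow> 'a set) \<Rightarrow> real)) \<Rightarrow> 'a set set \<Rightarrow> 'a set set" where
  "Sz z \<alpha> = (\<lambda>v. v \<alpha>) ` carrier_simplex (z {\<alpha>})"

lemma N0_mem: "v \<in> N0 X l \<Longrightarrow> \<alpha> \<in> l \<Longrightarrow> v \<alpha> \<in> \<alpha>"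
  unfolding N0_def by (auto simp: PiE_def Pi_def)

lemma Sz_sub: assumes "z \<in> Ninf X \<A>" "\<alpha> \<in> \<A>" shows "Sz z \<alpha> \<subseteq> \<alpha>" "Sz z \<alpha> \<noteq> {}"
proof -
  have np: "z {\<alpha>} \<in> Npoly X {\<alpha>}" using ninf_npoly[OF assms(1) single_Lam[OF assms(2)]] .
  show "Sz z \<alpha> \<subseteq> \<alpha>" unfolding Sz_def using npoly_props(3)[OF np] N0_mem by blast
  show "Sz z \<alpha> \<noteq> {}" unfolding Sz_def using npoly_props(2)[OF np] by blast
qed

lemma carrier_restrict_Sz:
  assumes z: "z \<in> Ninf X \<A>" and l: "l \<in> Lam \<A>" and v: "v \<in> carrier_simplex (z l)" and a: "\<alpha> \<in> l"
  shows "v \<alpha> \<in> Sz z \<alpha>"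
proof -
  have aA: "\<alpha> \<in> \<A>" using l a unfolding Lam_def by blast
  have "carrier_simplex (z {\<alpha>}) = (\<lambda>v. restrict v {\<alpha>}) ` carrier_simplex (z l)"
    using ninf_carrier[OF z single_Lam[OF aA] l] a by blast
  then have "restrict v {\<alpha>} \<in> carrier_simplex (z {\<alpha>})" using v by blast
  moreover have "(restrict v {\<alpha>}) \<alpha> = v \<alpha>" by simp
  ultimately show ?thesis unfolding Sz_def by (metis image_eqI)
qed

lemma Sz_elem:
  assumes z: "z \<in> Ninf X \<A>" and l: "l \<in> Lam \<A>" and a: "\<alpha> \<in> l" and V: "V \<in> Sz z \<alpha>"
  obtains v where "v \<in> carrier_simplex (z l)" "V = v \<alpha>"
proof -
  have aA: "\<alpha> \<in> \<A>" using l a unfolding Lam_def by blast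
  have "carrier_simplex (z {\<alpha>}) = (\<lambda>v. restrict v {\<alpha>}) ` carrier_simplex (z l)"
    using ninf_carrier[OF z single_Lam[OF aA] l] a by blast
  moreover obtain u where u: "u \<in> carrier_simplex (z {\<alpha>})" "V = u \<alpha>" using V unfolding Sz_def by blast
  ultimately have "u \<in> (\<lambda>v. restrict v {\<alpha>}) ` carrier_simplex (z l)" by simp
  then obtain v where v: "v \<in> carrier_simplex (z l)" "u = restrict v {\<alpha>}" by (rule imageE)
  have "V = v \<alpha>" using u(2) v(2) by simp
  then show ?thesis using that v(1) by blast
qed

lemma wedge_pt_Sz:
  assumes z: "z \<in> Ninf X \<A>" and l: "l \<in> Lam \<A>" and q: "q \<in> wedge_pt X l (z l)"
    and a: "\<alpha> \<in> l" and V: "V \<in> Sz z \<alpha>"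
  shows "q \<in> V"
proof -
  obtain v where v: "v \<in> carrier_simplex (z l)" "V = v \<alpha>" using Sz_elem[OF z l a V] by blast
  then have "q \<in> wedge X l v" using q unfolding wedge_pt_def by blast
  then show ?thesis using v a unfolding wedge_def by blast
qed

lemma charac:
  assumes z: "z \<in> Ninf X \<A>"
  shows "(x \<in> topspace X \<and> (\<forall>l\<in>Lam \<A>. x \<in> wedge_pt X l (z l))) \<longleftrightarrow>
         (x \<in> topspace X \<and> (\<forall>\<alpha>\<in>\<A>. \<forall>V\<in>Sz z \<alpha>. x \<in> V))"
proof (intro iffI conjI ballI)
  assume h: "x \<in> topspace X \<and> (\<forall>l\<in>Lam \<A>. x \<in> wedge_pt X l (z l))"
  then show "x \<in> topspace X" by blast
  fix \<alpha> V assume a: "\<alpha> \<in> \<A>" and V: "V \<in> Sz z \<alpha>"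
  have "x \<in> wedge_pt X {\<alpha>} (z {\<alpha>})" using h single_Lam[OF a] by blast
  then show "x \<in> V" using wedge_pt_Sz[OF z single_Lam[OF a] _ singletonI V] by blast
next
  assume hh: "x \<in> topspace X \<and> (\<forall>\<alpha>\<in>\<A>. \<forall>V\<in>Sz z \<alpha>. x \<in> V)"
  then show "x \<in> topspace X" by blast
  have x: "x \<in> topspace X" and h: "\<forall>\<alpha>\<in>\<A>. \<forall>V\<in>Sz z \<alpha>. x \<in> V" using hh by auto
  fix l assume l: "l \<in> Lam \<A>"
  have "x \<in> wedge X l v" if v: "v \<in> carrier_simplex (z l)" for v
  proof -
    have "\<forall>\<alpha>\<in>l. x \<in> v \<alpha>"
    proof
      fix \<alpha> assume a: "\<alpha> \<in> l"
      then have "\<alpha> \<in> \<A>" using l unfolding Lam_def by blast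
      then show "x \<in> v \<alpha>" using h carrier_restrict_Sz[OF z l v a] by blast
    qed
    then show ?thesis using x unfolding wedge_def by blast
  qed
  then show "x \<in> wedge_pt X l (z l)" using x unfolding wedge_pt_def by blast
qed

lemma Sz_fip:
  assumes z: "z \<in> Ninf X \<A>" and F: "finite F" "F \<subseteq> \<A>"
  shows "\<exists>q. \<forall>\<alpha>\<in>F. \<forall>V\<in>Sz z \<alpha>. q \<in> V"
proof -
  have l: "F \<in> Lam \<A>" using F unfolding Lam_def by blast
  have np: "z F \<in> Npoly X F" using ninf_npoly[OF z l] .
  obtain q where q: "q \<in> (\<Inter>v\<in>carrier_simplex (z F). wedge X F v)" using npoly_props(4)[OF np] by blast
  obtain v0 where v0: "v0 \<in> carrier_simplex (z F)" using npoly_props(2)[OF np] by blast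
  have "q \<in> topspace X" using q v0 unfolding wedge_def by blast
  then have "q \<in> wedge_pt X F (z F)" using q unfolding wedge_pt_def by blast
  then show ?thesis using wedge_pt_Sz[OF z l] by blast
qed

lemma ninf_top_ne:
  assumes z: "z \<in> Ninf X \<A>" shows "topspace X \<noteq> {}"
proof -
  have l: "{} \<in> Lam \<A>" unfolding Lam_def by simp
  have np: "z {} \<in> Npoly X {}" using ninf_npoly[OF z l] .
  obtain q where q: "q \<in> (\<Inter>v\<in>carrier_simplex (z {}). wedge X {} v)" using npoly_props(4)[OF np] by blast
  obtain v0 where v0: "v0 \<in> carrier_simplex (z {})" using npoly_props(2)[OF np] by blast
  show ?thesis using q v0 unfolding wedge_def by blast
qed


lemma pi_eq:
  assumes H: "Hausdorff_space X"
    and cov: "\<forall>\<alpha>\<in>\<A>. closed_lf_normal_cover X \<alpha>"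
    and I: "condition_I X \<A>" and II: "condition_II \<A>"
    and z: "z \<in> Ninf X \<A>"
  shows "pi_map X \<A> z = x \<longleftrightarrow> x \<in> topspace X \<and> (\<forall>\<alpha>\<in>\<A>. \<forall>V\<in>Sz z \<alpha>. x \<in> V)"
proof -
  have S: "\<forall>\<alpha>\<in>\<A>. Sz z \<alpha> \<subseteq> \<alpha> \<and> Sz z \<alpha> \<noteq> {}" using Sz_sub[OF z] by blast
  have ex: "\<exists>!x. x \<in> topspace X \<and> (\<forall>\<alpha>\<in>\<A>. \<forall>V\<in>Sz z \<alpha>. x \<in> V)"
    by (rule key[OF H cov I II ninf_top_ne[OF z] S Sz_fip[OF z]])
  have ch: "\<And>x. (x \<in> topspace X \<and> (\<forall>l\<in>Lam \<A>. x \<in> wedge_pt X l (z l))) \<longleftrightarrow>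
         (x \<in> topspace X \<and> (\<forall>\<alpha>\<in>\<A>. \<forall>V\<in>Sz z \<alpha>. x \<in> V))" using charac[OF z] by blast
  have ex2: "\<exists>!x. x \<in> topspace X \<and> (\<forall>l\<in>Lam \<A>. x \<in> wedge_pt X l (z l))"
    using ex unfolding ch .
  show ?thesis
  proof
    assume "pi_map X \<A> z = x"
    then have "x \<in> topspace X \<and> (\<forall>l\<in>Lam \<A>. x \<in> wedge_pt X l (z l))"
      unfolding pi_map_def using theI'[OF ex2] by simp
    then show "x \<in> topspace X \<and> (\<forall>\<alpha>\<in>\<A>. \<forall>V\<in>Sz z \<alpha>. x \<in> V)" unfolding ch .
  next
    assume "x \<in> topspace X \<and> (\<forall>\<alpha>\<in>\<A>. \<forall>V\<in>Sz z \<alpha>. x \<in> V)"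
    then have "x \<in> topspace X \<and> (\<forall>l\<in>Lam \<A>. x \<in> wedge_pt X l (z l))" unfolding ch .
    then show "pi_map X \<A> z = x" unfolding pi_map_def by (rule the1_equality[OF ex2])
  qed
qed

lemma carrier_vertex: "carrier_simplex (vertex_pt v) = {v}"
  unfolding carrier_simplex_def vertex_pt_def by auto

lemma wedge_sub: "wedge X l v \<subseteq> topspace X"
  unfolding wedge_def by blast

lemma wedge_pt_vertex: "wedge_pt X l (vertex_pt v) = wedge X l v"
  unfolding wedge_pt_def carrier_vertex using wedge_sub[of X l v] by auto

lemma W_open:
  "openin (Ntop X l) {a \<in> Npoly X l. \<exists>v\<in>C. a v \<noteq> 0}"
proof -
  let ?W = "{a \<in> Npoly X l. \<exists>v\<in>C. a v \<noteq> 0}"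
  have "weak_open X l ?W"
    unfolding weak_open_def
  proof (intro conjI allI impI)
    show "?W \<subseteq> Npoly X l" by blast
    fix \<sigma> assume s: "is_simplex X l \<sigma>"
    have gs: "geom_simplex \<sigma> \<subseteq> Npoly X l" using s unfolding Npoly_def by blast
    have eq: "?W \<inter> geom_simplex \<sigma> = geom_simplex \<sigma> \<inter> (\<Union>v\<in>C. {a. 0 < a v})"
    proof (intro set_eqI iffI)
      fix a assume "a \<in> ?W \<inter> geom_simplex \<sigma>"
      then obtain v where "v \<in> C" "a v \<noteq> 0" "a \<in> geom_simplex \<sigma>" by blast
      moreover then have "0 \<le> a v" unfolding geom_simplex_def by blast
      ultimately show "a \<in> geom_simplex \<sigma> \<inter> (\<Union>v\<in>C. {a. 0 < a v})" by force
    next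
      fix a assume "a \<in> geom_simplex \<sigma> \<inter> (\<Union>v\<in>C. {a. 0 < a v})"
      then obtain v where v: "v \<in> C" "0 < a v" "a \<in> geom_simplex \<sigma>" by blast
      then have "a v \<noteq> 0" by simp
      then show "a \<in> ?W \<inter> geom_simplex \<sigma>" using gs v by blast
    qed
    have "open {a::('a set set \<Rightarrow> 'a set) \<Rightarrow> real. 0 < a v}" for v
      by (rule open_Collect_less) simp_all
    then have "open (\<Union>v\<in>C. {a::('a set set \<Rightarrow> 'a set) \<Rightarrow> real. 0 < a v})" by blast
    then show "openin (top_of_set (geom_simplex \<sigma>)) (?W \<inter> geom_simplex \<sigma>)"
      unfolding eq by (rule openin_open_Int)
  qed
  then show ?thesis unfolding Ntop_def topology_inverse'[OF istopology_weak_open] .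
qed

lemma proj_cont:
  assumes "l \<in> Lam \<A>"
  shows "continuous_map (Ninf_top X \<A>) (Ntop X l) (\<lambda>z. z l)"
  unfolding Ninf_top_def
  by (rule continuous_map_from_subtopology[OF continuous_map_product_projection[OF assms]])

lemma topspace_Ninf_top: "topspace (Ninf_top X \<A>) \<subseteq> Ninf X \<A>"
  unfolding Ninf_top_def by simp


theorem proposition2p4:
  fixes X :: "'a topology" and \<A> :: "'a set set set"
  assumes "topologically_complete X"
    and "\<forall>\<alpha>\<in>\<A>. closed_lf_normal_cover X \<alpha>"
    and "condition_I X \<A>"
    and "condition_II \<A>"
  shows "continuous_map (Ninf_top X \<A>) X (pi_map X \<A>) \<and>
    (\<forall>z\<in>N0inf X \<A>. \<forall>z'\<in>N0inf X \<A>.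
       pi_map X \<A> z' = pi_map X \<A> z \<longleftrightarrow>
       (\<forall>l\<in>Lam \<A>. wedge_pt X l (z' l) \<in> star (cov X l) (wedge_pt X l (z l)))) \<and>
    (\<forall>z\<in>Ninf X \<A>. \<forall>z0\<in>N0inf X \<A>.
       (\<forall>l\<in>Lam \<A>. \<exists>v. z0 l = vertex_pt v \<and> v \<in> carrier_simplex (z l))
       \<longrightarrow> pi_map X \<A> z = pi_map X \<A> z0)"
proof -
  have H: "Hausdorff_space X" using assms(1) unfolding topologically_complete_def tychonoff_space_def by blast
  note cov = assms(2) and I = assms(3) and II = assms(4)
  note pe = pi_eq[OF H cov I II]
  have pz: "pi_map X \<A> z \<in> topspace X \<and> (\<forall>\<alpha>\<in>\<A>. \<forall>V\<in>Sz z \<alpha>. pi_map X \<A> z \<in> V)"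
    if z: "z \<in> Ninf X \<A>" for z
    using pe[OF z, of "pi_map X \<A> z"] by simp
  have pw: "\<forall>l\<in>Lam \<A>. pi_map X \<A> z \<in> wedge_pt X l (z l)" if z: "z \<in> Ninf X \<A>" for z
    using pz[OF z] charac[OF z, of "pi_map X \<A> z"] by blast
  have part1: "continuous_map (Ninf_top X \<A>) X (pi_map X \<A>)"
    unfolding continuous_map_def
  proof (intro conjI allI impI)
    show "pi_map X \<A> \<in> topspace (Ninf_top X \<A>) \<rightarrow> topspace X"
      using pz topspace_Ninf_top by blast
    fix U assume U: "openin X U"
    show "openin (Ninf_top X \<A>) {z \<in> topspace (Ninf_top X \<A>). pi_map X \<A> z \<in> U}"
    proof (subst openin_subopen, intro ballI)
      fix z assume zz: "z \<in> {z \<in> topspace (Ninf_top X \<A>). pi_map X \<A> z \<in> U}"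
      then have z: "z \<in> Ninf X \<A>" and xU: "pi_map X \<A> z \<in> U" using topspace_Ninf_top by blast+
      define x where "x = pi_map X \<A> z"
      obtain \<alpha> where a: "\<alpha> \<in> \<A>" and aU: "\<Union>(star \<alpha> {x}) \<subseteq> U"
        using condI_use[OF I U] xU unfolding x_def by blast
      have la: "{\<alpha>} \<in> Lam \<A>" using single_Lam[OF a] .
      define C where "C = carrier_simplex (z {\<alpha>})"
      define T where "T = {z' \<in> topspace (Ninf_top X \<A>). z' {\<alpha>} \<in> {a \<in> Npoly X {\<alpha>}. \<exists>v\<in>C. a v \<noteq> 0}}"
      have "openin (Ninf_top X \<A>) T" unfolding T_def
        by (rule openin_continuous_map_preimage[OF proj_cont[OF la] W_open])
      moreover have "z \<in> T"
      proof -
        have "z {\<alpha>} \<in> Npoly X {\<alpha>}" using ninf_npoly[OF z la] .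
        moreover obtain v where "v \<in> C" using npoly_props(2)[OF ninf_npoly[OF z la]] unfolding C_def by blast
        moreover then have "z {\<alpha>} v \<noteq> 0" unfolding C_def carrier_simplex_def by blast
        ultimately show ?thesis unfolding T_def using zz by blast
      qed
      moreover have "T \<subseteq> {z \<in> topspace (Ninf_top X \<A>). pi_map X \<A> z \<in> U}"
      proof
        fix z' assume z'T: "z' \<in> T"
        then have z': "z' \<in> Ninf X \<A>" unfolding T_def using topspace_Ninf_top by blast
        obtain v where v: "v \<in> C" "z' {\<alpha>} v \<noteq> 0" using z'T unfolding T_def by blast
        have vc': "v \<in> carrier_simplex (z' {\<alpha>})" using v(2) unfolding carrier_simplex_def by blast
        have "v \<alpha> \<in> Sz z' \<alpha>" unfolding Sz_def using vc' by blast
        then have p': "pi_map X \<A> z' \<in> v \<alpha>" using pz[OF z'] a by blast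
        have "v \<alpha> \<in> Sz z \<alpha>" unfolding Sz_def using v(1) unfolding C_def by blast
        then have px: "x \<in> v \<alpha>" using pz[OF z] a unfolding x_def by blast
        have "v \<in> N0 X {\<alpha>}" using npoly_props(3)[OF ninf_npoly[OF z la]] v(1) unfolding C_def by blast
        then have "v \<alpha> \<in> \<alpha>" using N0_mem by blast
        then have "v \<alpha> \<in> star \<alpha> {x}" using px unfolding star_def by blast
        then have "pi_map X \<A> z' \<in> U" using aU p' by blast
        then show "z' \<in> {z \<in> topspace (Ninf_top X \<A>). pi_map X \<A> z \<in> U}" using z'T unfolding T_def by blast
      qed
      ultimately show "\<exists>T. openin (Ninf_top X \<A>) T \<and> z \<in> T \<and> T \<subseteq> {z \<in> topspace (Ninf_top X \<A>). pi_map X \<A> z \<in> U}"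
        by blast
    qed
  qed
  have part2: "\<forall>z\<in>N0inf X \<A>. \<forall>z'\<in>N0inf X \<A>.
       pi_map X \<A> z' = pi_map X \<A> z \<longleftrightarrow>
       (\<forall>l\<in>Lam \<A>. wedge_pt X l (z' l) \<in> star (cov X l) (wedge_pt X l (z l)))"
  proof (intro ballI iffI)
    fix z z' l assume z0: "z \<in> N0inf X \<A>" and z'0: "z' \<in> N0inf X \<A>"
      and eq: "pi_map X \<A> z' = pi_map X \<A> z" and l: "l \<in> Lam \<A>"
    have z: "z \<in> Ninf X \<A>" and z': "z' \<in> Ninf X \<A>" using z0 z'0 unfolding N0inf_def by blast+
    obtain v where v: "v \<in> N0 X l" "z' l = vertex_pt v" using z'0 l unfolding N0inf_def by blast
    have "wedge_pt X l (z' l) \<in> cov X l" unfolding v(2) wedge_pt_vertex cov_def using v(1) by blast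
    moreover have "pi_map X \<A> z \<in> wedge_pt X l (z' l) \<inter> wedge_pt X l (z l)"
      using pw[OF z] pw[OF z'] eq l by auto
    ultimately show "wedge_pt X l (z' l) \<in> star (cov X l) (wedge_pt X l (z l))"
      unfolding star_def by blast
  next
    fix z z' assume z0: "z \<in> N0inf X \<A>" and z'0: "z' \<in> N0inf X \<A>"
      and h: "\<forall>l\<in>Lam \<A>. wedge_pt X l (z' l) \<in> star (cov X l) (wedge_pt X l (z l))"
    have z: "z \<in> Ninf X \<A>" and z': "z' \<in> Ninf X \<A>" using z0 z'0 unfolding N0inf_def by blast+
    define S where "S = (\<lambda>\<alpha>. Sz z \<alpha> \<union> Sz z' \<alpha>)"
    have S: "\<forall>\<alpha>\<in>\<A>. S \<alpha> \<subseteq> \<alpha> \<and> S \<alpha> \<noteq> {}" unfolding S_def using Sz_sub[OF z] Sz_sub[OF z'] by blast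
    have fip: "\<exists>q. \<forall>\<alpha>\<in>F. \<forall>V\<in>S \<alpha>. q \<in> V" if F: "finite F" "F \<subseteq> \<A>" "F \<noteq> {}" for F
    proof -
      have l: "F \<in> Lam \<A>" using F unfolding Lam_def by blast
      then have "wedge_pt X F (z' F) \<inter> wedge_pt X F (z F) \<noteq> {}" using h unfolding star_def by blast
      then obtain q where q: "q \<in> wedge_pt X F (z' F)" "q \<in> wedge_pt X F (z F)" by blast
      have "\<forall>\<alpha>\<in>F. \<forall>V\<in>Sz z \<alpha>. q \<in> V" using wedge_pt_Sz[OF z l q(2)] by blast
      moreover have "\<forall>\<alpha>\<in>F. \<forall>V\<in>Sz z' \<alpha>. q \<in> V" using wedge_pt_Sz[OF z' l q(1)] by blast
      ultimately show ?thesis unfolding S_def by blast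
    qed
    obtain x where x: "x \<in> topspace X" "\<forall>\<alpha>\<in>\<A>. \<forall>V\<in>S \<alpha>. x \<in> V"
      using key[OF H cov I II ninf_top_ne[OF z] S fip] by blast
    have "pi_map X \<A> z = x" using pe[OF z] x unfolding S_def by blast
    moreover have "pi_map X \<A> z' = x" using pe[OF z'] x unfolding S_def by blast
    ultimately show "pi_map X \<A> z' = pi_map X \<A> z" by simp
  qed
  have part3: "\<forall>z\<in>Ninf X \<A>. \<forall>z0\<in>N0inf X \<A>.
       (\<forall>l\<in>Lam \<A>. \<exists>v. z0 l = vertex_pt v \<and> v \<in> carrier_simplex (z l))
       \<longrightarrow> pi_map X \<A> z = pi_map X \<A> z0"
  proof (intro ballI impI)
    fix z z0 assume z: "z \<in> Ninf X \<A>" and z00: "z0 \<in> N0inf X \<A>"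
      and h: "\<forall>l\<in>Lam \<A>. \<exists>v. z0 l = vertex_pt v \<and> v \<in> carrier_simplex (z l)"
    have z0: "z0 \<in> Ninf X \<A>" using z00 unfolding N0inf_def by blast
    have sub: "Sz z0 \<alpha> \<subseteq> Sz z \<alpha>" if a: "\<alpha> \<in> \<A>" for \<alpha>
    proof -
      obtain v where v: "z0 {\<alpha>} = vertex_pt v" "v \<in> carrier_simplex (z {\<alpha>})"
        using h single_Lam[OF a] by blast
      then show ?thesis unfolding Sz_def v(1) carrier_vertex by blast
    qed
    have "pi_map X \<A> z0 = pi_map X \<A> z"
      using pe[OF z0, of "pi_map X \<A> z"] pz[OF z] sub by blast
    then show "pi_map X \<A> z = pi_map X \<A> z0" by simp
  qed
  show ?thesis using part1 part2 part3 by blast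
qed

end
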